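(* Let $S$ be special with $D=\det S=\Omega^2\Delta$, and define $N_1,\dots,N_5$ as in the context. (i) For every $x\in\mathcal C(S)$ there exist $\ell\in\mathbb Z$ and $M\in\mathrm{SL}_3(\mathbb Z)$ whose first column is $x^t$ such that $M^tSM=S_3$, where \[ S_3=\begin{pmatrix} 0&0&N_3N_5N_4^2N_2\\ 0&-N_3N_5^3N_1&0\\ N_3N_5N_4^2N_2&0&N_4N_2\ell\end{pmatrix}. \] All entries of $S_3$ other than the $(3,3)$-entry are thus independent of $x$ and of the orbit; only $\ell$ depends on the orbit of $x$. (ii) If moreover $D$ is odd, then $\ell$ can be chosen with $0\le \ell<N$ and $\gcd(\ell,N)=1$, and with this normalization $\ell$ is uniquely determined by the $\mathbb Z$-orbit of $x$. (iii) The primitive adjugate of $S_3$ is \[ S_3^\dagger=\begin{pmatrix} -\ell N_5N_1&0&N_3N_5^2N_4N_1\\ 0&-N_3N_4^3N_2&0\\ N_3N_5^2N_4N_1&0&0\end{pmatrix}. \]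
   Context: $S$ is a symmetric $3\times3$ integer matrix with $D=\det S>0$; $S(x)=xSx^t$. Primitive: gcd of entries is $1$; isotropic: $S(x)=0$ for some primitive $x\in\mathbb Z^3$. $S^*=(\det S)S^{-1}$ is the adjugate; $\Omega<0$ is defined by: $-\Omega$ is the gcd of the entries of $S^*$ (the $2\times 2$ minors of $S$); $\Delta=D/\Omega^2$ is a positive integer. $N=\gcd(\Omega,\Delta)>0$. $S$ is special if it is primitive, isotropic, $D>0$ and $N$, $|\Omega|/N$, $\Delta/N$ are square-free. Define positive integers $N_5=\gcd(N,|\Omega|/N)$, $N_4=\gcd(N,\Delta/N)$, $N_3=N/(N_4N_5)$, $N_2=|\Omega|/(NN_5)$, $N_1=\Delta/(NN_4)$; these are square-free, pairwise coprime, $\Omega=-N_5^2N_4N_3N_2$, $\Delta=N_4^2N_5N_3N_1$, $D=N_1N_2^2N_3^3N_4^4N_5^5$. $\mathcal C(S)$ is the set of primitive $x\in\mathbb Z^3$ with $S(x)=0$; $x,x'\in\mathcal C(S)$ are in the same $\mathbb Z$-orbit if $x'=xA^t$ for some $A\in\mathrm{GL}_3(\mathbb Z)$ with $A^tSA=S$. The primitive adjugate of a matrix $T$ of this type is $T^\dagger=T^*/g$ where $T^*$ is its adjugate and $g>0$ is the gcd of the entries of $T^*$ (for $T=S_3$, $g=-\Omega$). *)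

theory Defs
  imports "HOL-Analysis.Analysis" "HOL-Computational_Algebra.Squarefree"
begin

type_synonym mat3 = "int^3^3"
type_synonym vec3 = "int^3"

definition qf :: "mat3 \<Rightarrow> vec3 \<Rightarrow> int" where
  "qf S x = (\<Sum>i\<in>UNIV. \<Sum>j\<in>UNIV. x$i * S$i$j * x$j)"

definition primitive_vec :: "vec3 \<Rightarrow> bool" where
  "primitive_vec x \<longleftrightarrow> Gcd (range (\<lambda>i. x$i)) = 1"

definition entries_gcd :: "mat3 \<Rightarrow> int" where
  "entries_gcd A = Gcd {A$i$j | i j. True}"

definition primitive_mat :: "mat3 \<Rightarrow> bool" where
  "primitive_mat A \<longleftrightarrow> entries_gcd A = 1"

definition isotropic :: "mat3 \<Rightarrow> bool" where
  "isotropic S \<longleftrightarrow> (\<exists>x. primitive_vec x \<and> qf S x = 0)"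

text \<open>Adjugate (transpose of the cofactor matrix) of a 3x3 matrix, written with
  cyclic indices (index arithmetic in the type 3 is mod 3); it equals det(A) A^{-1}.\<close>
definition adj3 :: "mat3 \<Rightarrow> mat3" where
  "adj3 A = (\<chi> i j. A$(j+1)$(i+1) * A$(j+2)$(i+2) - A$(j+1)$(i+2) * A$(j+2)$(i+1))"

definition Omega :: "mat3 \<Rightarrow> int" where
  "Omega S = - entries_gcd (adj3 S)"

definition Delta :: "mat3 \<Rightarrow> int" where
  "Delta S = det S div (Omega S)^2"

definition NN :: "mat3 \<Rightarrow> int" where
  "NN S = gcd (Omega S) (Delta S)"

definition special :: "mat3 \<Rightarrow> bool" where
  "special S \<longleftrightarrow> primitive_mat S \<and> isotropic S \<and> det S > 0 \<and>
     squarefree (NN S) \<and> squarefree (\<bar>Omega S\<bar> div NN S) \<and> squarefree (Delta S div NN S)"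

definition N5 :: "mat3 \<Rightarrow> int" where "N5 S = gcd (NN S) (\<bar>Omega S\<bar> div NN S)"
definition N4 :: "mat3 \<Rightarrow> int" where "N4 S = gcd (NN S) (Delta S div NN S)"
definition N3 :: "mat3 \<Rightarrow> int" where "N3 S = NN S div (N4 S * N5 S)"
definition N2 :: "mat3 \<Rightarrow> int" where "N2 S = \<bar>Omega S\<bar> div (NN S * N5 S)"
definition N1 :: "mat3 \<Rightarrow> int" where "N1 S = Delta S div (NN S * N4 S)"

definition CS :: "mat3 \<Rightarrow> vec3 set" where
  "CS S = {x. primitive_vec x \<and> qf S x = 0}"

text \<open>Same Z-orbit: x' = x A^t (row vectors), i.e. x' = A x (column vectors),
  with A in GL_3(Z) and A^t S A = S.\<close>
definition same_orbit :: "mat3 \<Rightarrow> vec3 \<Rightarrow> vec3 \<Rightarrow> bool" where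
  "same_orbit S x x' \<longleftrightarrow> (\<exists>A::mat3. (det A = 1 \<or> det A = -1) \<and>
      transpose A ** S ** A = S \<and> x' = A *v x)"

definition S3 :: "mat3 \<Rightarrow> int \<Rightarrow> mat3" where
  "S3 S l = vector [
     vector [0, 0, N3 S * N5 S * (N4 S)^2 * N2 S],
     vector [0, - N3 S * (N5 S)^3 * N1 S, 0],
     vector [N3 S * N5 S * (N4 S)^2 * N2 S, 0, N4 S * N2 S * l]]"

definition S3_dagger :: "mat3 \<Rightarrow> int \<Rightarrow> mat3" where
  "S3_dagger S l = vector [
     vector [- l * N5 S * N1 S, 0, N3 S * (N5 S)^2 * N4 S * N1 S],
     vector [0, - N3 S * (N4 S)^3 * N2 S, 0],
     vector [N3 S * (N5 S)^2 * N4 S * N1 S, 0, 0]]"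

definition prim_adj :: "mat3 \<Rightarrow> mat3" where
  "prim_adj T = (\<chi> i j. adj3 T $ i $ j div entries_gcd (adj3 T))"

definition good :: "mat3 \<Rightarrow> vec3 \<Rightarrow> int \<Rightarrow> mat3 \<Rightarrow> bool" where
  "good S x l M \<longleftrightarrow> det M = 1 \<and> column 1 M = x \<and> transpose M ** S ** M = S3 S l"

end

theory Submission
  imports Defs
begin

definition m3 :: "int \<Rightarrow> int \<Rightarrow> int \<Rightarrow> int \<Rightarrow> int \<Rightarrow> int \<Rightarrow> int \<Rightarrow> int \<Rightarrow> int \<Rightarrow> mat3" where
  "m3 a b c d e f g h i = vector [vector [a,b,c], vector [d,e,f], vector [g,h,i]]"

lemma m3_nth [simp]:
  "m3 a b c d e f g h i $ 1 $ 1 = a" "m3 a b c d e f g h i $ 1 $ 2 = b" "m3 a b c d e f g h i $ 1 $ 3 = c"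
  "m3 a b c d e f g h i $ 2 $ 1 = d" "m3 a b c d e f g h i $ 2 $ 2 = e" "m3 a b c d e f g h i $ 2 $ 3 = f"
  "m3 a b c d e f g h i $ 3 $ 1 = g" "m3 a b c d e f g h i $ 3 $ 2 = h" "m3 a b c d e f g h i $ 3 $ 3 = i"
  by (simp_all add: m3_def)

lemma m3_eta: "A = m3 (A$1$1) (A$1$2) (A$1$3) (A$2$1) (A$2$2) (A$2$3) (A$3$1) (A$3$2) (A$3$3)"
  by (simp add: vec_eq_iff forall_3)

lemma m3_eq_iff: "m3 a b c d e f g h i = m3 a' b' c' d' e' f' g' h' i' \<longleftrightarrow>
   a = a' \<and> b = b' \<and> c = c' \<and> d = d' \<and> e = e' \<and> f = f' \<and> g = g' \<and> h = h' \<and> i = i'"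
  by (auto simp: vec_eq_iff forall_3 m3_def)

lemma m3_mult: "m3 a b c d e f g h i ** m3 a' b' c' d' e' f' g' h' i' =
  m3 (a*a'+b*d'+c*g') (a*b'+b*e'+c*h') (a*c'+b*f'+c*i')
     (d*a'+e*d'+f*g') (d*b'+e*e'+f*h') (d*c'+e*f'+f*i')
     (g*a'+h*d'+i*g') (g*b'+h*e'+i*h') (g*c'+h*f'+i*i')"
  by (simp add: vec_eq_iff forall_3 matrix_matrix_mult_def sum_3)

lemma m3_transpose: "transpose (m3 a b c d e f g h i) = m3 a d g b e h c f i"
  by (simp add: vec_eq_iff forall_3 transpose_def)

lemma m3_det: "det (m3 a b c d e f g h i) = a*e*i - a*f*h - b*d*i + b*f*g + c*d*h - c*e*g"
  by (simp add: det_3 algebra_simps)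

lemma three_idx [simp]: "(4::3) = 1" "(5::3) = 2" "(6::3) = 3"
  by simp_all

lemma m3_adj: "adj3 (m3 a b c d e f g h i) =
   m3 (e*i - f*h) (c*h - b*i) (b*f - c*e)
      (f*g - d*i) (a*i - c*g) (c*d - a*f)
      (d*h - e*g) (b*g - a*h) (a*e - b*d)"
  by (simp add: vec_eq_iff forall_3 adj3_def algebra_simps)

lemma m3_mat: "(mat k :: mat3) = m3 k 0 0 0 k 0 0 0 k"
  by (simp add: vec_eq_iff forall_3 mat_def)


lemma m3_cases: obtains a b c d e f g h i where "A = m3 a b c d e f g h i"
  using m3_eta by blast

lemma adj3_mult: "adj3 (A ** B) = adj3 B ** adj3 A"
proof -
  obtain a b c d e f g h i where A: "A = m3 a b c d e f g h i" by (rule m3_cases)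
  obtain a' b' c' d' e' f' g' h' i' where B: "B = m3 a' b' c' d' e' f' g' h' i'" by (rule m3_cases)
  show ?thesis unfolding A B m3_mult m3_adj m3_eq_iff by (simp add: algebra_simps)
qed

lemma adj3_transpose: "adj3 (transpose A) = transpose (adj3 A)"
proof -
  obtain a b c d e f g h i where A: "A = m3 a b c d e f g h i" by (rule m3_cases)
  show ?thesis unfolding A m3_transpose m3_adj m3_eq_iff by (simp add: algebra_simps)
qed

lemma mult_adj3: "A ** adj3 A = mat (det A)"
proof -
  obtain a b c d e f g h i where A: "A = m3 a b c d e f g h i" by (rule m3_cases)
  show ?thesis unfolding A m3_mult m3_adj m3_mat m3_det m3_eq_iff by (simp add: algebra_simps)
qed

lemma adj3_mult_self: "adj3 A ** A = mat (det A)"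
proof -
  obtain a b c d e f g h i where A: "A = m3 a b c d e f g h i" by (rule m3_cases)
  show ?thesis unfolding A m3_mult m3_adj m3_mat m3_det m3_eq_iff by (simp add: algebra_simps)
qed

lemma adj3_adj3: "adj3 (adj3 A) = mat (det A) ** A"
proof -
  obtain a b c d e f g h i where A: "A = m3 a b c d e f g h i" by (rule m3_cases)
  show ?thesis unfolding A m3_mult m3_adj m3_mat m3_det m3_eq_iff by (simp add: algebra_simps)
qed

lemma det_adj3: "det (adj3 A) = det A ^ 2"
proof -
  obtain a b c d e f g h i where A: "A = m3 a b c d e f g h i" by (rule m3_cases)
  show ?thesis unfolding A m3_adj m3_det by (simp add: algebra_simps power2_eq_square)
qed


lemma eg_dvd: "entries_gcd A dvd A$i$j"
  unfolding entries_gcd_def by (rule Gcd_dvd) blast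

lemma eg_greatest: "(\<And>i j. d dvd A$i$j) \<Longrightarrow> d dvd entries_gcd A"
  unfolding entries_gcd_def by (rule Gcd_greatest) blast

lemma eg_nonneg: "entries_gcd A \<ge> 0"
  unfolding entries_gcd_def by simp

lemma dvd_mult_left_mat: "(\<And>i j. d dvd A$i$j) \<Longrightarrow> d dvd (B ** A :: mat3)$i$j"
  by (simp add: matrix_matrix_mult_def dvd_sum)

lemma dvd_mult_right_mat: "(\<And>i j. d dvd A$i$j) \<Longrightarrow> d dvd (A ** B :: mat3)$i$j"
  by (simp add: matrix_matrix_mult_def dvd_sum)

lemma eg_cong_dvd: "entries_gcd A dvd entries_gcd (B ** A ** C)"
  by (intro eg_greatest dvd_mult_right_mat dvd_mult_left_mat eg_dvd)

lemma eg_cong: assumes "det P = 1" shows "entries_gcd (transpose P ** A ** P) = entries_gcd A"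
proof -
  let ?Q = "adj3 P"
  have "transpose ?Q ** (transpose P ** A ** P) ** ?Q = (transpose (P ** ?Q)) ** A ** (P ** ?Q)"
    by (simp add: matrix_transpose_mul matrix_mul_assoc)
  also have "\<dots> = A" using assms by (simp add: mult_adj3)
  finally have e: "transpose ?Q ** (transpose P ** A ** P) ** ?Q = A" .
  have "entries_gcd (transpose P ** A ** P) dvd entries_gcd A"
    using eg_cong_dvd[of "transpose P ** A ** P" "transpose ?Q" ?Q] e by simp
  then show ?thesis
    by (intro zdvd_antisym_nonneg[OF eg_nonneg eg_nonneg] eg_cong_dvd)
qed

lemma det_cong: assumes "det P = 1" shows "det (transpose P ** A ** P) = det A"
  using assms by (simp add: det_mul det_transpose)

lemma adj_cong: "adj3 (transpose P ** A ** P) = transpose (transpose (adj3 P)) ** adj3 A ** transpose (adj3 P)"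
  by (simp add: adj3_mult adj3_transpose matrix_mul_assoc)

lemma det_transpose_adj: "det P = 1 \<Longrightarrow> det (transpose (adj3 P)) = 1"
  by (simp add: det_transpose det_adj3)

lemma eg_adj_cong: assumes "det P = 1"
  shows "entries_gcd (adj3 (transpose P ** A ** P)) = entries_gcd (adj3 A)"
  unfolding adj_cong by (rule eg_cong[OF det_transpose_adj[OF assms]])

lemma qf_cong: "(transpose M ** S ** M) $ 1 $ 1 = qf S (column 1 M)"
  unfolding qf_def
  by (simp add: matrix_matrix_mult_def transpose_def column_def sum_3 algebra_simps)

lemma adj_adj_div: assumes "primitive_mat S" shows "(entries_gcd (adj3 S))^2 dvd det S"
proof -
  let ?W = "entries_gcd (adj3 S)"
  have "?W^2 dvd adj3 (adj3 S) $ i $ j" for i j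
  proof -
    have "?W dvd adj3 S $ k $ l" for k l by (rule eg_dvd)
    then show ?thesis unfolding adj3_def[of "adj3 S"] vec_lambda_beta power2_eq_square
      by (intro dvd_diff mult_dvd_mono)
  qed
  moreover have "(mat k ** A :: mat3)$i$j = k * A$i$j" for k A i j
    using exhaust_3[of i] by (auto simp: matrix_matrix_mult_def mat_def sum_3)
  ultimately have "?W^2 dvd det S * S$i$j" for i j
    by (metis adj3_adj3)
  then have "?W^2 dvd Gcd {det S * S$i$j | i j. True}"
    by (intro Gcd_greatest) auto
  also have "{det S * S$i$j | i j. True} = (*) (det S) ` {S$i$j | i j. True}" by auto
  also have "Gcd \<dots> = normalize (det S * entries_gcd S)"
    unfolding entries_gcd_def by (rule Gcd_mult)
  finally have "?W^2 dvd det S * entries_gcd S" by simp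
  then show ?thesis using assms by (simp add: primitive_mat_def)
qed


lemma mmult: "prime (p::int) \<Longrightarrow> x \<noteq> 0 \<Longrightarrow> y \<noteq> 0 \<Longrightarrow> multiplicity p (x*y) = multiplicity p x + multiplicity p y"
  by (rule prime_elem_multiplicity_mult_distrib) auto

lemma sqf_mult_le1: "squarefree (x::int) \<Longrightarrow> prime p \<Longrightarrow> multiplicity p x \<le> 1"
  using squarefree_factorial_semiring''[of x] by (cases "x = 0") auto

lemma not_coprime_prime: assumes "\<not> coprime (a::int) b" "a \<noteq> 0"
  shows "\<exists>p. prime p \<and> p dvd a \<and> p dvd b"
proof -
  have "gcd a b \<noteq> 0" using assms by simp
  moreover have "\<not> is_unit (gcd a b)" using assms by (simp add: is_unit_gcd coprime_iff_gcd_eq_1)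
  ultimately obtain p where "p dvd gcd a b" "prime p" using prime_divisor_exists by blast
  then show ?thesis by auto
qed

lemma Nstruct:
  fixes W Dl :: int
  assumes W: "W > 0" and Dl: "Dl > 0"
    and sq1: "squarefree (gcd W Dl)" and sq2: "squarefree (W div gcd W Dl)"
    and sq3: "squarefree (Dl div gcd W Dl)"
  defines "n \<equiv> gcd W Dl"
  defines "n5 \<equiv> gcd n (W div n)" and "n4 \<equiv> gcd n (Dl div n)"
  defines "n3 \<equiv> n div (n4*n5)" and "n2 \<equiv> W div (n*n5)" and "n1 \<equiv> Dl div (n*n4)"
  shows "n1 > 0 \<and> n2 > 0 \<and> n3 > 0 \<and> n4 > 0 \<and> n5 > 0 \<and>
     W = n5^2*n4*n3*n2 \<and> Dl = n4^2*n5*n3*n1 \<and> n = n3*n4*n5 \<and>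
     (\<forall>p. prime p \<longrightarrow> multiplicity p n1 + multiplicity p n2 + multiplicity p n3 + multiplicity p n4 + multiplicity p n5 \<le> 1)"
proof -
  have n0: "n > 0" unfolding n_def using W by simp
  define w where "w = W div n"
  define d where "d = Dl div n"
  have Wn: "W = n * w" unfolding w_def n_def by simp
  have Dn: "Dl = n * d" unfolding d_def n_def by simp
  have w0: "w > 0" using Wn W n0 by (simp add: zero_less_mult_iff)
  have d0: "d > 0" using Dn Dl n0 by (simp add: zero_less_mult_iff)
  have sqn: "squarefree n" using sq1 n_def by simp
  have sqw: "squarefree w" using sq2 n_def w_def by simp
  have sqd: "squarefree d" using sq3 n_def d_def by simp
  have n5d: "n5 dvd n" "n5 dvd w" unfolding n5_def w_def by auto
  have n4d: "n4 dvd n" "n4 dvd d" unfolding n4_def d_def by auto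
  have n5p: "n5 > 0" unfolding n5_def using n0 by simp
  have n4p: "n4 > 0" unfolding n4_def using n0 by simp
  have cop: "coprime n4 n5"
  proof (rule ccontr)
    assume "\<not> coprime n4 n5"
    then obtain p where p: "prime p" "p dvd n4" "p dvd n5"
      using n4p not_coprime_prime by (metis less_irrefl)
    have "p^2 dvd W" using p n4d n5d Wn by (metis dvd_trans mult_dvd_mono power2_eq_square)
    moreover have "p^2 dvd Dl" using p n4d n5d Dn by (metis dvd_trans mult_dvd_mono power2_eq_square)
    ultimately have "p^2 dvd n" unfolding n_def by simp
    then show False using sqn p squarefree_factorial_semiring[of n] n0 by auto
  qed
  have "n4*n5 dvd n" using n4d n5d cop by (simp add: divides_mult)
  then have n3e: "n = n4*n5*n3" unfolding n3_def by simp
  have "n*n5 dvd W" using Wn n5d by simp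
  then have n2e: "W = n*n5*n2" unfolding n2_def by simp
  have "n*n4 dvd Dl" using Dn n4d by simp
  then have n1e: "Dl = n*n4*n1" unfolding n1_def by simp
  have n3p: "n3 > 0" using n3e n0 n4p n5p by (metis mult_pos_pos zero_less_mult_pos)
  have n2p: "n2 > 0" using n2e W n0 n5p by (metis mult_pos_pos zero_less_mult_pos)
  have n1p: "n1 > 0" using n1e Dl n0 n4p by (metis mult_pos_pos zero_less_mult_pos)
  have we: "w = n5 * n2" using Wn n2e n0 by simp
  have de: "d = n4 * n1" using Dn n1e n0 by simp
  have "multiplicity p n1 + multiplicity p n2 + multiplicity p n3 + multiplicity p n4 + multiplicity p n5 \<le> 1"
    if p: "prime p" for p
  proof -
    define a1 where "a1 = multiplicity p n1"
    define a2 where "a2 = multiplicity p n2"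
    define a3 where "a3 = multiplicity p n3"
    define a4 where "a4 = multiplicity p n4"
    define a5 where "a5 = multiplicity p n5"
    have vn: "multiplicity p n = a3 + a4 + a5" unfolding a3_def a4_def a5_def n3e
      using p n3p n4p n5p by (simp add: mmult)
    have vw: "multiplicity p w = a5 + a2" unfolding a2_def a5_def we
      using p n2p n5p by (simp add: mmult)
    have vd: "multiplicity p d = a4 + a1" unfolding a4_def a1_def de
      using p n4p n1p by (simp add: mmult)
    have h1: "a3 + a4 + a5 \<le> 1" using sqf_mult_le1[OF sqn p] vn by simp
    have h2: "a5 + a2 \<le> 1" using sqf_mult_le1[OF sqw p] vw by simp
    have h3: "a4 + a1 \<le> 1" using sqf_mult_le1[OF sqd p] vd by simp
    have "multiplicity p n5 = min (multiplicity p n) (multiplicity p w)" unfolding n5_def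
      using multiplicity_gcd[of n "W div n" p] n0 w0 p w_def by simp
    then have h4: "a5 = min (a3+a4+a5) (a5+a2)" using vn vw a5_def by simp
    have "multiplicity p n4 = min (multiplicity p n) (multiplicity p d)" unfolding n4_def
      using multiplicity_gcd[of n "Dl div n" p] n0 d0 p d_def by simp
    then have h5: "a4 = min (a3+a4+a5) (a4+a1)" using vn vd a4_def by simp
    have "multiplicity p n = min (multiplicity p W) (multiplicity p Dl)"
      unfolding n_def using multiplicity_gcd[of W Dl p] W Dl p by simp
    then have h6: "min (a5+a2) (a4+a1) = 0"
      using vn vw vd Wn Dn p n0 w0 d0 by (simp add: mmult)
    show ?thesis unfolding a1_def[symmetric] a2_def[symmetric] a3_def[symmetric] a4_def[symmetric] a5_def[symmetric]
      using h1 h2 h3 h4 h5 h6 by (simp add: min_def split: if_splits)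
  qed
  then show ?thesis using n1p n2p n3p n4p n5p n3e n2e n1e
    by (simp add: power2_eq_square algebra_simps)
qed


lemma core:
  fixes g r s t W Dl n1 n2 n3 n4 n5 :: int
  assumes g0: "g > 0" and r0: "r < 0" and W0: "W > 0" and Dl0: "Dl > 0"
    and prim: "\<And>p. prime p \<Longrightarrow> p dvd g \<Longrightarrow> p dvd r \<Longrightarrow> p dvd s \<Longrightarrow> p dvd t \<Longrightarrow> False"
    and Wd: "W = gcd (r*t - s * s) (gcd (g * s) (gcd (g*r) (g*g)))"
    and D: "g*g*(-r) = W^2 * Dl"
    and pos: "n1 > 0" "n2 > 0" "n3 > 0" "n4 > 0" "n5 > 0"
    and We: "W = n5^2*n4*n3*n2" and De: "Dl = n4^2*n5*n3*n1"
    and loc: "\<And>p. prime p \<Longrightarrow> multiplicity p n1 + multiplicity p n2 + multiplicity p n3 + multiplicity p n4 + multiplicity p n5 \<le> 1"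
  shows "g = n3*n5*n4^2*n2 \<and> r = - (n3*n5^3*n1) \<and> gcd g r dvd s"
proof -
  have key: "multiplicity p g = multiplicity p n3 + multiplicity p n5 + 2*multiplicity p n4 + multiplicity p n2
     \<and> multiplicity p (-r) = multiplicity p n3 + 3*multiplicity p n5 + multiplicity p n1
     \<and> (s \<noteq> 0 \<longrightarrow> min (multiplicity p g) (multiplicity p r) \<le> multiplicity p s)" if p: "prime p" for p
  proof -
    define a1 where "a1 = multiplicity p n1"
    define a2 where "a2 = multiplicity p n2"
    define a3 where "a3 = multiplicity p n3"
    define a4 where "a4 = multiplicity p n4"
    define a5 where "a5 = multiplicity p n5"
    define \<gamma> where "\<gamma> = multiplicity p g"
    define \<rho> where "\<rho> = multiplicity p r"
    define \<omega> where "\<omega> = multiplicity p W"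
    have pp: "prime_elem p" using p by (rule prime_imp_prime_elem)
    have p1: "\<bar>p\<bar> \<noteq> 1" using prime_gt_1_int[OF p] by simp
    have sum: "a1+a2+a3+a4+a5 \<le> 1" using loc[OF p] unfolding a1_def a2_def a3_def a4_def a5_def .
    have vW: "\<omega> = 2*a5+a4+a3+a2" unfolding \<omega>_def We a2_def a3_def a4_def a5_def
      using pos p pp by (simp add: mmult prime_elem_multiplicity_power_distrib)
    have vD: "multiplicity p Dl = 2*a4+a5+a3+a1" unfolding De a1_def a3_def a4_def a5_def
      using pos p pp by (simp add: mmult prime_elem_multiplicity_power_distrib)
    have e1: "2*\<gamma> + \<rho> = 2*\<omega> + multiplicity p Dl"
    proof -
      have "multiplicity p (g*g*(-r)) = multiplicity p (W^2 * Dl)" using D by simp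
      then show ?thesis unfolding \<gamma>_def \<rho>_def \<omega>_def using g0 r0 W0 Dl0 p pp
        by (simp add: mmult prime_elem_multiplicity_power_distrib)
    qed
    have e2: "\<omega> \<le> 2*\<gamma>"
    proof -
      have "W dvd g*g" unfolding Wd by (rule dvd_trans[OF gcd_dvd2 dvd_trans[OF gcd_dvd2 gcd_dvd2]])
      then have "\<omega> \<le> multiplicity p (g*g)" unfolding \<omega>_def using g0
        by (intro dvd_imp_multiplicity_le) auto
      then show ?thesis unfolding \<gamma>_def using g0 p by (simp add: mmult)
    qed
    have rp: "\<rho> \<ge> 1 \<longleftrightarrow> p dvd r" unfolding \<rho>_def using power_dvd_iff_le_multiplicity[where p=p and n=1 and x=r] r0 p1 by simp
    have gp: "\<gamma> \<ge> 1 \<longleftrightarrow> p dvd g" unfolding \<gamma>_def using power_dvd_iff_le_multiplicity[where p=p and n=1 and x=g] g0 p1 by simp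
    have e3: "\<omega> = 0" if "p dvd r" "\<not> p dvd s"
    proof -
      have "\<not> p dvd r*t - s * s"
      proof
        assume "p dvd r*t - s * s"
        moreover have "p dvd r*t" using that by simp
        ultimately have "p dvd r*t - (r*t - s * s)" by (rule dvd_diff[rotated])
        then have "p dvd s * s" by simp
        then show False using that p by (simp add: prime_dvd_mult_iff)
      qed
      moreover have "W dvd r*t - s * s" unfolding Wd by simp
      ultimately have "\<not> p dvd W" using dvd_trans by blast
      then show ?thesis unfolding \<omega>_def by (simp add: not_dvd_imp_multiplicity_0)
    qed
    have e4: "\<omega> \<le> 1" if "\<gamma> = 2" "\<rho> = 1" "p dvd s"
    proof -
      have pg: "p dvd g" using gp that by simp
      have pr: "p dvd r" using rp that by simp
      have pt: "\<not> p dvd t" using prim[OF p pg pr \<open>p dvd s\<close>] by blast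
      have "\<not> p^2 dvd r*t - s * s"
      proof
        assume "p^2 dvd r*t - s * s"
        moreover have "p^2 dvd s * s" using \<open>p dvd s\<close> by (simp add: power2_eq_square mult_dvd_mono)
        ultimately have "p^2 dvd (r*t - s * s) + s * s" by (rule dvd_add)
        then have "p^2 dvd r*t" by simp
        moreover have "r*t \<noteq> 0" using r0 pt by auto
        ultimately have "2 \<le> multiplicity p (r*t)" using power_dvd_iff_le_multiplicity[where p=p and n=2 and x="r*t"] p1 by simp
        moreover have "multiplicity p (r*t) = \<rho> + multiplicity p t"
          unfolding \<rho>_def using p r0 pt by (subst mmult) auto
        moreover have "multiplicity p t = 0" using pt by (simp add: not_dvd_imp_multiplicity_0)
        ultimately show False using that by simp
      qed
      moreover have "W dvd r*t - s * s" unfolding Wd by simp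
      ultimately have "\<not> p^2 dvd W" using dvd_trans by blast
      then show ?thesis unfolding \<omega>_def using power_dvd_iff_le_multiplicity[where p=p and n=2 and x=W] W0 p1 by simp
    qed
    have e5: "\<omega> \<ge> 2" if "\<gamma> = 1" "\<rho> = 2" "p dvd s"
    proof -
      have pg: "p dvd g" using gp that by simp
      have pr2: "p^2 dvd r" using that unfolding \<rho>_def using power_dvd_iff_le_multiplicity[where p=p and n=2 and x=r] r0 p1 by simp
      have ss: "p^2 dvd s * s" using \<open>p dvd s\<close> by (simp add: power2_eq_square mult_dvd_mono)
      have "p^2 dvd r*t - s * s" using pr2 ss by (simp add: dvd_diff)
      moreover have "p^2 dvd g * s" using pg \<open>p dvd s\<close> by (simp add: power2_eq_square mult_dvd_mono)
      moreover have "p^2 dvd g*r" using pg pr2 by (simp add: dvd_mult)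
      moreover have "p^2 dvd g*g" using pg by (simp add: power2_eq_square mult_dvd_mono)
      ultimately have "p^2 dvd W" unfolding Wd by simp
      then show ?thesis unfolding \<omega>_def using power_dvd_iff_le_multiplicity[where p=p and n=2 and x=W] W0 p1 by simp
    qed
    have sp: "multiplicity p s \<ge> 1" if "p dvd s" "s \<noteq> 0" using that power_dvd_iff_le_multiplicity[where p=p and n=1 and x=s] p1 by simp
    have res: "\<gamma> = a3 + a5 + 2*a4 + a2 \<and> \<rho> = a3 + 3*a5 + a1 \<and> (min \<gamma> \<rho> \<ge> 1 \<longrightarrow> p dvd s)"
    proof -
      consider "a1 = 1" | "a2 = 1" | "a3 = 1" | "a4 = 1" | "a5 = 1" | "a1 = 0 \<and> a2 = 0 \<and> a3 = 0 \<and> a4 = 0 \<and> a5 = 0"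
        using sum by linarith
      then show ?thesis
      proof cases
        case 1
        then have "a2 = 0" "a3 = 0" "a4 = 0" "a5 = 0" using sum by auto
        then have "2*\<gamma> + \<rho> = 1" using 1 e1 vW vD by auto
        then have "\<gamma> = 0" "\<rho> = 1" by arith+
        then show ?thesis using 1 \<open>a2 = 0\<close> \<open>a3 = 0\<close> \<open>a4 = 0\<close> \<open>a5 = 0\<close> by auto
      next
        case 2
        then have z: "a1 = 0" "a3 = 0" "a4 = 0" "a5 = 0" using sum by auto
        then have "2*\<gamma> + \<rho> = 2" "\<omega> = 1" using 2 e1 vW vD by auto
        then have "\<gamma> = 1" "\<rho> = 0" using e2 by arith+
        then show ?thesis using 2 z by auto
      next
        case 3
        then have z: "a1 = 0" "a2 = 0" "a4 = 0" "a5 = 0" using sum by auto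
        then have h: "2*\<gamma> + \<rho> = 3" "\<omega> = 1" using 3 e1 vW vD by auto
        then have "\<gamma> = 1" "\<rho> = 1" using e2 by arith+
        moreover have "p dvd s" using e3 h rp \<open>\<rho> = 1\<close> by fastforce
        ultimately show ?thesis using 3 z by auto
      next
        case 4
        then have z: "a1 = 0" "a2 = 0" "a3 = 0" "a5 = 0" using sum by auto
        then have h: "2*\<gamma> + \<rho> = 4" "\<omega> = 1" using 4 e1 vW vD by auto
        have "\<gamma> = 2"
        proof (rule ccontr)
          assume "\<gamma> \<noteq> 2"
          then have "\<gamma> = 1" "\<rho> = 2" using h e2 by arith+
          moreover then have "p dvd s" using e3 h rp by fastforce
          ultimately show False using e5 h by fastforce
        qed
        then show ?thesis using h 4 z by auto
      next
        case 5
        then have z: "a1 = 0" "a2 = 0" "a3 = 0" "a4 = 0" using sum by auto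
        then have h: "2*\<gamma> + \<rho> = 5" "\<omega> = 2" using 5 e1 vW vD by auto
        have ps: "p dvd s" if "\<rho> \<ge> 1" using e3 h rp that by fastforce
        have "\<gamma> = 1"
        proof (rule ccontr)
          assume "\<gamma> \<noteq> 1"
          then have "\<gamma> = 2" "\<rho> = 1" using h e2 by arith+
          then show False using e4 ps h by fastforce
        qed
        then show ?thesis using h 5 z ps by auto
      next
        case 6
        then have "2*\<gamma> + \<rho> = 0" using e1 vW vD by auto
        then have "\<gamma> = 0" "\<rho> = 0" by arith+
        then show ?thesis using 6 by auto
      qed
    qed
    have mr: "multiplicity p (-r) = \<rho>" unfolding \<rho>_def by simp
    show ?thesis
    proof (intro conjI impI)
      show "multiplicity p g = multiplicity p n3 + multiplicity p n5 + 2 * multiplicity p n4 + multiplicity p n2"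
        using res unfolding \<gamma>_def a2_def a3_def a4_def a5_def by simp
      show "multiplicity p (- r) = multiplicity p n3 + 3 * multiplicity p n5 + multiplicity p n1"
        using res mr unfolding a1_def a3_def a5_def by simp
      assume s0: "s \<noteq> 0"
      have m1: "min \<gamma> \<rho> \<le> 1" using res sum by (simp add: min_def)
      have "min \<gamma> \<rho> \<le> multiplicity p s"
      proof (cases "min \<gamma> \<rho> \<ge> 1")
        case True
        then have "p dvd s" using res by blast
        then show ?thesis using sp[OF _ s0] m1 by simp
      next
        case False
        then have "min \<gamma> \<rho> = 0" by (simp add: min_def)
        then show ?thesis by simp
      qed
      then show "min (multiplicity p g) (multiplicity p r) \<le> multiplicity p s"
        unfolding \<gamma>_def \<rho>_def .
    qed
  qed
  have G: "g = n3*n5*n4^2*n2"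
  proof (rule multiplicity_eq_int)
    show "g > 0" by (rule g0)
    show "n3*n5*n4^2*n2 > 0" using pos by simp
    fix p :: int assume p: "prime p"
    then have pp: "prime_elem p" by (rule prime_imp_prime_elem)
    show "multiplicity p g = multiplicity p (n3*n5*n4^2*n2)"
      using key[OF p] pos pp by (simp add: mmult[OF p] prime_elem_multiplicity_power_distrib)
  qed
  have R: "-r = n3*n5^3*n1"
  proof (rule multiplicity_eq_int)
    show "-r > 0" using r0 by simp
    show "n3*n5^3*n1 > 0" using pos by simp
    fix p :: int assume p: "prime p"
    then have pp: "prime_elem p" by (rule prime_imp_prime_elem)
    show "multiplicity p (-r) = multiplicity p (n3*n5^3*n1)"
      using key[OF p] pos pp by (simp add: mmult[OF p] prime_elem_multiplicity_power_distrib)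
  qed
  have S: "gcd g r dvd s"
  proof (cases "s = 0")
    case False
    show ?thesis
    proof (rule multiplicity_le_imp_dvd)
      show "gcd g r \<noteq> 0" using g0 by simp
      fix p :: int assume p: "prime p"
      have "multiplicity p (gcd g r) = min (multiplicity p g) (multiplicity p r)"
        using g0 r0 p by (intro multiplicity_gcd) auto
      moreover have "min (multiplicity p g) (multiplicity p r) \<le> multiplicity p s"
        using key[OF p] False by blast
      ultimately show "multiplicity p (gcd g r) \<le> multiplicity p s" by simp
    qed
  qed simp
  show ?thesis using G R S by simp
qed


lemma prim_vec_gcd: "primitive_vec x \<Longrightarrow> gcd (x$1) (gcd (x$2) (x$3)) = 1"
proof -
  assume "primitive_vec x"
  moreover have "range (\<lambda>i. x$i) = {x$1, x$2, x$3}" by (simp add: UNIV_3)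
  ultimately show ?thesis unfolding primitive_vec_def by simp
qed

lemma complete_basis:
  assumes "primitive_vec x"
  shows "\<exists>P. det P = 1 \<and> column 1 P = x"
proof -
  define a where "a = x$1"
  define b where "b = x$2"
  define c where "c = x$3"
  define d where "d = gcd a b"
  have g1: "gcd d c = 1" using prim_vec_gcd[OF assms] unfolding a_def b_def c_def d_def
    by (simp add: gcd.assoc)
  obtain a1 a2 u v where ab: "a = d*a1" "b = d*a2" "u*a1 + v * a2 = 1"
  proof (cases "d = 0")
    case True
    then have "a = 0" "b = 0" unfolding d_def by auto
    then show ?thesis using that[of 1 0 1 0] True by simp
  next
    case False
    define a1 where "a1 = a div d"
    define a2 where "a2 = b div d"
    have e: "a = d*a1" "b = d*a2" unfolding a1_def a2_def d_def by simp_all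
    have "a \<noteq> 0 \<or> b \<noteq> 0" using False d_def by auto
    then have "coprime a1 a2" unfolding a1_def a2_def d_def by (rule div_gcd_coprime)
    then have "gcd a1 a2 = 1" by (simp add: coprime_iff_gcd_eq_1)
    then obtain u v where "u*a1 + v * a2 = 1" using bezout_int[of a1 a2] by auto
    then show ?thesis using that e by blast
  qed
  obtain p q where pq: "p*d + q*c = 1" using bezout_int[of d c] g1 by auto
  define P where "P = m3 a (-v) (-q*a1) b u (-q*a2) c 0 p"
  have "det P = p*d*(u*a1 + v * a2) + q*c*(u*a1+v * a2)"
    unfolding P_def m3_det ab(1) ab(2) by (simp add: algebra_simps)
  also have "\<dots> = 1" using ab(3) pq by simp
  finally have "det P = 1" .
  moreover have "column 1 P = x"
    unfolding P_def column_def a_def b_def c_def by (simp add: vec_eq_iff forall_3)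
  ultimately show ?thesis by blast
qed

lemma reduce_form:
  fixes p q e f h :: int
  assumes "det (m3 0 p q p e f q f h) \<noteq> 0"
  shows "\<exists>Q g r s t. det Q = 1 \<and> Q$1$1 = 1 \<and> Q$2$1 = 0 \<and> Q$3$1 = 0 \<and> g > 0 \<and>
     transpose Q ** m3 0 p q p e f q f h ** Q = m3 0 0 g 0 r s g s t"
proof -
  define g where "g = gcd p q"
  have g0: "g > 0"
  proof (rule ccontr)
    assume "\<not> g > 0"
    then have "p = 0" "q = 0" unfolding g_def by auto
    then show False using assms by (simp add: m3_det)
  qed
  obtain p' q' where pq: "p = g*p'" "q = g*q'" unfolding g_def by (meson gcd_dvd1 gcd_dvd2 dvdE)
  have "p \<noteq> 0 \<or> q \<noteq> 0" using g0 g_def by auto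
  then have "coprime (p div g) (q div g)" unfolding g_def by (rule div_gcd_coprime)
  moreover have "p div g = p'" "q div g = q'" using pq g0 by simp_all
  ultimately have "gcd p' q' = 1" by (simp add: coprime_iff_gcd_eq_1)
  then obtain u v where uv: "u*p' + v * q' = 1" using bezout_int[of p' q'] by auto
  define Q where "Q = m3 1 0 0 0 q' u 0 (-p') v"
  have "det Q = 1" unfolding Q_def m3_det using uv by (simp add: algebra_simps)
  moreover have "transpose Q ** m3 0 p q p e f q f h ** Q =
     m3 0 0 g 0 (q'*(e*q' - f*p') - p'*(f*q' - h*p')) (u*(e*q' - f*p') + v * (f*q' - h*p'))
        g (u*(e*q' - f*p') + v * (f*q' - h*p')) (u*(e*u + f * v) + v * (f*u + h * v))"
    unfolding Q_def m3_transpose m3_mult m3_eq_iff pq using uv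
    by (simp add: algebra_simps) (metis (no_types, lifting) distrib_left mult.assoc mult.commute mult_1_right)
  ultimately show ?thesis using g0 unfolding Q_def by fastforce
qed


lemma special_facts:
  assumes sp: "special S"
  defines "W \<equiv> entries_gcd (adj3 S)"
  shows "Omega S = -W \<and> W > 0 \<and> Delta S > 0 \<and> det S = W^2 * Delta S \<and>
    N1 S > 0 \<and> N2 S > 0 \<and> N3 S > 0 \<and> N4 S > 0 \<and> N5 S > 0 \<and>
    W = (N5 S)^2 * N4 S * N3 S * N2 S \<and> Delta S = (N4 S)^2 * N5 S * N3 S * N1 S \<and>
    NN S = N3 S * N4 S * N5 S \<and>
    (\<forall>p. prime p \<longrightarrow> multiplicity p (N1 S) + multiplicity p (N2 S) + multiplicity p (N3 S) + multiplicity p (N4 S) + multiplicity p (N5 S) \<le> 1)"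
proof -
  have prim: "primitive_mat S" and dpos: "det S > 0"
    and sq: "squarefree (NN S)" "squarefree (\<bar>Omega S\<bar> div NN S)" "squarefree (Delta S div NN S)"
    using sp unfolding special_def by auto
  have Om: "Omega S = -W" unfolding Omega_def W_def ..
  have W0: "W \<ge> 0" unfolding W_def by (rule eg_nonneg)
  have Wne: "W \<noteq> 0"
  proof
    assume "W = 0"
    then have "adj3 S $ i $ j = 0" for i j using eg_dvd[of "adj3 S" i j] unfolding W_def by simp
    then have "adj3 S = mat 0" by (simp add: vec_eq_iff mat_def)
    then have "mat (det S) = (mat 0 :: mat3)" using mult_adj3[of S] by simp
    then have "(mat (det S)::mat3)$1$1 = (mat 0::mat3)$1$1" by simp
    then have "det S = 0" by (simp add: mat_def)
    then show False using dpos by simp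
  qed
  then have Wp: "W > 0" using W0 by simp
  have dvd: "W^2 dvd det S" unfolding W_def by (rule adj_adj_div[OF prim])
  have DlE: "Delta S = det S div W^2" unfolding Delta_def Om by simp
  then have detE: "det S = W^2 * Delta S" using dvd by simp
  have Dlp: "Delta S > 0" using detE dpos Wp by (simp add: zero_less_mult_iff)
  have NNE: "NN S = gcd W (Delta S)" unfolding NN_def Om by simp
  have absO: "\<bar>Omega S\<bar> = W" using Om Wp by simp
  have ns: "squarefree (gcd W (Delta S))" "squarefree (W div gcd W (Delta S))" "squarefree (Delta S div gcd W (Delta S))"
    using sq NNE absO by auto
  note NSt = Nstruct[OF Wp Dlp ns]
  have e5: "N5 S = gcd (gcd W (Delta S)) (W div gcd W (Delta S))" unfolding N5_def NNE absO ..
  have e4: "N4 S = gcd (gcd W (Delta S)) (Delta S div gcd W (Delta S))" unfolding N4_def NNE ..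
  have e3: "N3 S = gcd W (Delta S) div (N4 S * N5 S)" unfolding N3_def NNE ..
  have e2: "N2 S = W div (gcd W (Delta S) * N5 S)" unfolding N2_def NNE absO ..
  have e1: "N1 S = Delta S div (gcd W (Delta S) * N4 S)" unfolding N1_def NNE ..
  show ?thesis using NSt Om Wp Dlp detE NNE unfolding e1 e2 e3 e4 e5 by simp
qed


lemma mge1: "prime (p::int) \<Longrightarrow> p dvd x \<Longrightarrow> x \<noteq> 0 \<Longrightarrow> multiplicity p x \<ge> 1"
  using power_dvd_iff_le_multiplicity[where p=p and n=1 and x=x] prime_gt_1_int[of p] by simp

lemma cop_loc:
  fixes n1 n2 n3 n4 n5 :: int
  assumes pos: "n1 > 0" "n2 > 0" "n3 > 0" "n4 > 0" "n5 > 0"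
    and loc: "\<And>p. prime p \<Longrightarrow> multiplicity p n1 + multiplicity p n2 + multiplicity p n3 + multiplicity p n4 + multiplicity p n5 \<le> 1"
  shows "coprime (n4*n2) (n3*n5^3*n1)"
proof (rule ccontr)
  assume "\<not> coprime (n4*n2) (n3*n5^3*n1)"
  then obtain p where p: "prime p" "p dvd n4*n2" "p dvd n3*n5^3*n1"
    using not_coprime_prime[of "n4*n2" "n3*n5^3*n1"] pos by auto
  have A: "p dvd n4 \<or> p dvd n2" using p by (simp add: prime_dvd_mult_iff)
  have B: "p dvd n3 \<or> p dvd n5 \<or> p dvd n1" using p by (auto simp add: prime_dvd_mult_iff prime_dvd_power_iff)
  have l: "multiplicity p n1 + multiplicity p n2 + multiplicity p n3 + multiplicity p n4 + multiplicity p n5 \<le> 1"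
    using loc p by simp
  have m: "multiplicity p n \<ge> 1" if "p dvd n" "n > 0" for n using mge1[OF p(1) that(1)] that(2) by simp
  from A B show False
  proof (elim disjE)
    assume "p dvd n4" "p dvd n3" then show False using m[of n4] m[of n3] pos l by linarith
  next
    assume "p dvd n4" "p dvd n5" then show False using m[of n4] m[of n5] pos l by linarith
  next
    assume "p dvd n4" "p dvd n1" then show False using m[of n4] m[of n1] pos l by linarith
  next
    assume "p dvd n2" "p dvd n3" then show False using m[of n2] m[of n3] pos l by linarith
  next
    assume "p dvd n2" "p dvd n5" then show False using m[of n2] m[of n5] pos l by linarith
  next
    assume "p dvd n2" "p dvd n1" then show False using m[of n2] m[of n1] pos l by linarith
  qed
qed

lemma col1_mult: "(B::mat3)$1$1 = 1 \<Longrightarrow> B$2$1 = 0 \<Longrightarrow> B$3$1 = 0 \<Longrightarrow> column 1 (A ** B :: mat3) = column 1 A"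
  by (simp add: column_def matrix_matrix_mult_def sum_3 vec_eq_iff)

lemma S3_m3: "S3 S l = m3 0 0 (N3 S * N5 S * (N4 S)^2 * N2 S) 0 (- N3 S * (N5 S)^3 * N1 S) 0
    (N3 S * N5 S * (N4 S)^2 * N2 S) 0 (N4 S * N2 S * l)"
  unfolding S3_def m3_def ..

lemma sym_entries: "transpose T = T \<Longrightarrow> T$j$i = T$i$j"
  by (metis transpose_def vec_lambda_beta)

lemma part1:
  assumes sym: "transpose S = S" and sp: "special S" and x: "x \<in> CS S"
  shows "\<exists>l M. good S x l M"
proof -
  define W where "W = entries_gcd (adj3 S)"
  note F = special_facts[OF sp, folded W_def]
  have dpos: "det S > 0" and prim: "entries_gcd S = 1"
    using sp unfolding special_def primitive_mat_def by auto
  have xp: "primitive_vec x" and xq: "qf S x = 0" using x unfolding CS_def by auto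
  obtain P where P: "det P = 1" "column 1 P = x" using complete_basis[OF xp] by blast
  define T where "T = transpose P ** S ** P"
  have Tsym: "transpose T = T" unfolding T_def using sym
    by (simp add: matrix_transpose_mul matrix_mul_assoc)
  have T11: "T$1$1 = 0" unfolding T_def qf_cong P xq ..
  have Tm: "T = m3 0 (T$1$2) (T$1$3) (T$1$2) (T$2$2) (T$2$3) (T$1$3) (T$2$3) (T$3$3)"
  proof -
    have "T$2$1 = T$1$2" "T$3$1 = T$1$3" "T$3$2 = T$2$3" using sym_entries[OF Tsym] by auto
    then show ?thesis using T11 by (intro trans[OF m3_eta[of T]]) simp
  qed
  have detT: "det T = det S" unfolding T_def using P by (simp add: det_cong)
  obtain Q g r s t where Q: "det Q = 1" "Q$1$1 = 1" "Q$2$1 = 0" "Q$3$1 = 0" and g0: "g > 0"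
    and TQ: "transpose Q ** T ** Q = m3 0 0 g 0 r s g s t"
    using reduce_form[of "T$1$2" "T$1$3" "T$2$2" "T$2$3" "T$3$3"] Tm detT dpos by force
  define T2 where "T2 = m3 0 0 g 0 r s g s t"
  have T2e: "T2 = transpose (P ** Q) ** S ** (P ** Q)"
    unfolding T2_def TQ[symmetric] T_def by (simp add: matrix_transpose_mul matrix_mul_assoc)
  have dPQ: "det (P ** Q) = 1" using P Q by (simp add: det_mul)
  have "det T2 = det S" using det_cong[OF dPQ, of S] T2e by simp
  then have detT2: "det S = - (g*g*r)" unfolding T2_def m3_det by (simp add: algebra_simps)
  have r0: "r < 0" using detT2 dpos g0 by (simp add: mult_less_0_iff zero_less_mult_iff)
  have egT2: "entries_gcd T2 = 1" using eg_cong[OF dPQ, of S] T2e prim by simp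
  have adjT2: "entries_gcd (adj3 T2) = W" using eg_adj_cong[OF dPQ, of S] T2e W_def by simp
  have primc: False if "prime p" "p dvd g" "p dvd r" "p dvd s" "p dvd t" for p
  proof -
    have "p dvd T2$i$j" for i j unfolding T2_def using that exhaust_3[of i] exhaust_3[of j] by auto
    then have "p dvd entries_gcd T2" by (rule eg_greatest)
    then show False using egT2 prime_gt_1_int[OF that(1)] by simp
  qed
  have adjm: "adj3 T2 = m3 (r*t - s * s) (g * s) (- (g*r)) (s * g) (- (g*g)) 0 (- (r*g)) 0 0"
    unfolding T2_def m3_adj by (simp add: algebra_simps)
  have Wd: "W = gcd (r*t - s * s) (gcd (g * s) (gcd (g*r) (g*g)))"
  proof (rule zdvd_antisym_nonneg)
    show "0 \<le> W" unfolding W_def by (rule eg_nonneg)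
    show "0 \<le> gcd (r*t - s * s) (gcd (g * s) (gcd (g*r) (g*g)))" by simp
    have "W dvd adj3 T2 $ i $ j" for i j unfolding adjT2[symmetric] by (rule eg_dvd)
    then have "W dvd (adj3 T2)$1$1" "W dvd (adj3 T2)$1$2" "W dvd (adj3 T2)$1$3" "W dvd (adj3 T2)$2$2" by blast+
    then have "W dvd r*t - s * s" "W dvd g * s" "W dvd g*r" "W dvd g*g"
      unfolding adjm by simp_all
    then show "W dvd gcd (r*t - s * s) (gcd (g * s) (gcd (g*r) (g*g)))" by simp
    define G where "G = gcd (r*t - s * s) (gcd (g * s) (gcd (g*r) (g*g)))"
    have G1: "G dvd r*t - s * s" unfolding G_def by (rule gcd_dvd1)
    have G2: "G dvd g * s" unfolding G_def by (rule dvd_trans[OF gcd_dvd2 gcd_dvd1])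
    have G3: "G dvd g * r" unfolding G_def by (rule dvd_trans[OF gcd_dvd2 dvd_trans[OF gcd_dvd2 gcd_dvd1]])
    have G4: "G dvd g * g" unfolding G_def by (rule dvd_trans[OF gcd_dvd2 dvd_trans[OF gcd_dvd2 gcd_dvd2]])
    have G5: "G dvd s * g" "G dvd r * g" using G2 G3 by (simp_all add: mult.commute)
    have "G dvd adj3 T2 $ i $ j" for i j
      unfolding adjm using exhaust_3[of i] exhaust_3[of j] G1 G2 G3 G4 G5
      by (elim disjE) simp_all
    then have "G dvd entries_gcd (adj3 T2)" by (rule eg_greatest)
    then show "gcd (r*t - s * s) (gcd (g * s) (gcd (g*r) (g*g))) dvd W"
      unfolding adjT2 G_def .
  qed
  have Dd: "g*g*(-r) = W^2 * Delta S" using F detT2 by simp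
  have C: "g = N3 S * N5 S * (N4 S)^2 * N2 S \<and> r = - (N3 S * (N5 S)^3 * N1 S) \<and> gcd g r dvd s"
    apply (rule core[OF g0 r0 _ _ primc Wd Dd])
    using F by auto
  obtain c where c: "s = gcd g r * c" using C by blast
  obtain u v where uv: "u * g + v * r = gcd g r" using bezout_int by blast
  define k where "k = - c * u"
  define m where "m = - c * v"
  have km: "s + m * r + k * g = 0" unfolding k_def m_def c uv[symmetric] by (simp add: algebra_simps)
  define val where "val = m*m*r + 2*m * s + t"
  have "r * val = (r*t - s * s) + (k*g)^2"
  proof -
    have "s + m*r = - (k*g)" using km by simp
    then have "(s + m*r)^2 = (k*g)^2" by simp
    then show ?thesis unfolding val_def by (simp add: algebra_simps power2_eq_square)
  qed
  moreover have "N4 S * N2 S dvd r*t - s * s"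
  proof -
    have "W = (N4 S * N2 S) * ((N5 S)^2 * N3 S)" using F by (simp add: algebra_simps)
    then have "N4 S * N2 S dvd W" by (rule dvdI)
    moreover have "W dvd r*t - s * s" unfolding Wd by (rule gcd_dvd1)
    ultimately show ?thesis by (rule dvd_trans)
  qed
  moreover have "N4 S * N2 S dvd (k*g)^2"
  proof -
    have "(k*g)^2 = (N4 S * N2 S) * (k*k*g*N3 S * N5 S * N4 S)" using C by (simp add: algebra_simps power2_eq_square)
    then show ?thesis by (rule dvdI)
  qed
  ultimately have "N4 S * N2 S dvd r * val" by simp
  moreover have "coprime (N4 S * N2 S) r"
    using cop_loc[of "N1 S" "N2 S" "N3 S" "N4 S" "N5 S"] F C by simp
  ultimately have vd: "N4 S * N2 S dvd val" by (simp add: coprime_dvd_mult_right_iff)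
  define l where "l = val div (N4 S * N2 S)"
  have vl: "val = N4 S * N2 S * l" unfolding l_def using vd by simp
  define R where "R = m3 1 k 0 0 1 m 0 0 1"
  define M where "M = P ** Q ** R"
  have "det M = 1" unfolding M_def R_def using P Q by (simp add: det_mul m3_det)
  moreover have "column 1 M = x" unfolding M_def R_def
    by (simp add: col1_mult Q P)
  moreover have "transpose M ** S ** M = S3 S l"
  proof -
    have "transpose M ** S ** M = transpose R ** T2 ** R"
      unfolding M_def T2e by (simp add: matrix_transpose_mul matrix_mul_assoc)
    also have "\<dots> = m3 0 0 g 0 r (s + m*r + k*g) g (s + m*r + k*g) val"
      unfolding R_def T2_def m3_transpose m3_mult m3_eq_iff val_def by (simp add: algebra_simps)
    also have "\<dots> = S3 S l" unfolding S3_m3 km vl using C by simp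
    finally show ?thesis .
  qed
  ultimately show ?thesis unfolding good_def by blast
qed


lemma adjS3:
  assumes sp: "special S"
  shows "adj3 (S3 S l) $ i $ j = entries_gcd (adj3 S) * S3_dagger S l $ i $ j"
proof -
  define W where "W = entries_gcd (adj3 S)"
  note F = special_facts[OF sp, folded W_def]
  have "adj3 (S3 S l) = m3 (W * (- l * N5 S * N1 S)) 0 (W * (N3 S * (N5 S)^2 * N4 S * N1 S))
       0 (W * (- N3 S * (N4 S)^3 * N2 S)) 0 (W * (N3 S * (N5 S)^2 * N4 S * N1 S)) 0 0"
    unfolding S3_m3 m3_adj m3_eq_iff using F by (simp add: algebra_simps power2_eq_square power3_eq_cube)
  moreover have "S3_dagger S l = m3 (- l * N5 S * N1 S) 0 (N3 S * (N5 S)^2 * N4 S * N1 S)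
       0 (- N3 S * (N4 S)^3 * N2 S) 0 (N3 S * (N5 S)^2 * N4 S * N1 S) 0 0"
    unfolding S3_dagger_def m3_def ..
  ultimately show ?thesis unfolding W_def[symmetric]
    using exhaust_3[of i] exhaust_3[of j] by (elim disjE) simp_all
qed

lemma good_adj: "good S x l M \<Longrightarrow> entries_gcd (adj3 (S3 S l)) = entries_gcd (adj3 S)"
  unfolding good_def by (metis eg_adj_cong)

lemma good_eg: "good S x l M \<Longrightarrow> entries_gcd (S3 S l) = entries_gcd S"
  unfolding good_def by (metis eg_cong)

lemma part3:
  assumes sp: "special S" and gd: "good S x l M"
  shows "prim_adj (S3 S l) = S3_dagger S l"
proof -
  define W where "W = entries_gcd (adj3 S)"
  note F = special_facts[OF sp, folded W_def]
  have e: "entries_gcd (adj3 (S3 S l)) = W" using good_adj[OF gd] W_def by simp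
  have W0: "W \<noteq> 0" using F by simp
  show ?thesis unfolding prim_adj_def e
    by (simp add: vec_eq_iff adjS3[OF sp] W_def[symmetric] nonzero_mult_div_cancel_left[OF W0])
qed

lemma good_coprime:
  assumes sp: "special S" and gd: "good S x l M"
  shows "coprime l (NN S)"
proof (rule ccontr)
  define W where "W = entries_gcd (adj3 S)"
  note F = special_facts[OF sp, folded W_def]
  assume "\<not> coprime l (NN S)"
  then obtain p where p: "prime p" "p dvd l" "p dvd NN S"
    using not_coprime_prime[of "NN S" l] F by (auto simp: coprime_commute)
  have p1: "\<not> p dvd 1" using prime_gt_1_int[OF p(1)] by simp
  have p345: "p dvd N3 S \<or> p dvd N4 S \<or> p dvd N5 S" using p F by (simp add: prime_dvd_mult_iff)
  show False
  proof (cases "p dvd N5 S")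
    case True
    note h = True
    have "p dvd S3 S l $ i $ j" for i j unfolding S3_m3
      using exhaust_3[of i] exhaust_3[of j] h p(2) by (elim disjE) (auto simp: power3_eq_cube intro: dvd_mult dvd_mult2)
    then have "p dvd entries_gcd (S3 S l)" by (rule eg_greatest)
    then show False using good_eg[OF gd] sp p1 unfolding special_def primitive_mat_def by simp
  next
    case False
    then have h: "p dvd N3 S \<or> p dvd N4 S" using p345 by blast
    have "p * W dvd adj3 (S3 S l) $ i $ j" for i j
    proof -
      have "p dvd S3_dagger S l $ i $ j" unfolding S3_dagger_def m3_def[symmetric]
        using exhaust_3[of i] exhaust_3[of j] h p(2) by (elim disjE) (auto simp: power3_eq_cube intro: dvd_mult dvd_mult2)
      then show ?thesis unfolding adjS3[OF sp] W_def[symmetric] by (simp add: mult.commute mult_dvd_mono)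
    qed
    then have "p * W dvd entries_gcd (adj3 (S3 S l))" by (rule eg_greatest)
    then have "p * W dvd 1 * W" using good_adj[OF gd] W_def by simp
    then have "p dvd 1" using F by (subst (asm) dvd_mult_cancel_right) auto
    then show False using p1 by simp
  qed
qed


lemma shift:
  assumes sp: "special S" and gd: "good S x l M"
    and e1: "u * (N3 S * N5 S * (N4 S)^2 * N2 S) + w * (- N3 S * (N5 S)^3 * N1 S) = 0"
    and e2: "2 * v * (N3 S * N5 S * (N4 S)^2 * N2 S) + w*w*(- N3 S * (N5 S)^3 * N1 S) = N4 S * N2 S * NN S * j"
  shows "good S x (l + NN S * j) (M ** m3 1 u v 0 1 w 0 0 1)"
proof -
  define U where "U = m3 1 u v 0 1 w 0 0 1"
  have d: "det M = 1" "column 1 M = x" "transpose M ** S ** M = S3 S l" using gd unfolding good_def by auto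
  have "det (M ** U) = 1" using d unfolding U_def by (simp add: det_mul m3_det)
  moreover have "column 1 (M ** U) = x" using d unfolding U_def by (simp add: col1_mult)
  moreover have "transpose (M ** U) ** S ** (M ** U) = S3 S (l + NN S * j)"
  proof -
    have "transpose (M ** U) ** S ** (M ** U) = transpose U ** (transpose M ** S ** M) ** U"
      by (simp add: matrix_transpose_mul matrix_mul_assoc)
    also have "\<dots> = transpose U ** S3 S l ** U" using d by simp
    also have "\<dots> = S3 S (l + NN S * j)"
      unfolding U_def S3_m3 m3_transpose m3_mult m3_eq_iff using e1 e2
      by (simp add: algebra_simps)
    finally show ?thesis .
  qed
  ultimately show ?thesis unfolding good_def U_def by blast
qed

lemma odd_dvd: "odd (D::int) \<Longrightarrow> a dvd D \<Longrightarrow> odd a"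
  using dvd_trans by blast

lemma part2_exist:
  assumes sym: "transpose S = S" and sp: "special S" and od: "odd (det S)" and x: "x \<in> CS S"
  shows "\<exists>l M. 0 \<le> l \<and> l < NN S \<and> gcd l (NN S) = 1 \<and> good S x l M"
proof -
  define W where "W = entries_gcd (adj3 S)"
  note F = special_facts[OF sp, folded W_def]
  obtain l M where gd: "good S x l M" using part1[OF sym sp x] by blast
  have cop: "coprime l (NN S)" by (rule good_coprime[OF sp gd])
  define N where "N = NN S"
  have N0: "N > 0" unfolding N_def using F by simp
  define l' where "l' = l mod N"
  define j where "j = - (l div N)"
  have lj: "l' = l + N * j" unfolding l'_def j_def using div_mult_mod_eq[of l N] by (simp add: algebra_simps)
  have b: "0 \<le> l'" "l' < N" unfolding l'_def using N0 by simp_all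
  have detE: "det S = (N1 S * N2 S^2 * N3 S^3 * N4 S^4 * N5 S^5)" using F
    by (simp add: algebra_simps power2_eq_square power3_eq_cube power4_eq_xxxx eval_nat_numeral)
  have o: "odd (N1 S)" "odd (N2 S)" "odd (N3 S)" "odd (N4 S)" "odd (N5 S)"
    using od unfolding detE by auto
  define K where "K = (N5 S)^2 * N1 S * (N4 S)^2 * N2 S"
  have oK: "odd K" unfolding K_def using o by simp
  have "\<exists>M'. good S x (l + N * j) M'"
  proof (cases "even j")
    case True
    then obtain h where h: "j = 2*h" by blast
    have "good S x (l + NN S * j) (M ** m3 1 0 h 0 1 0 0 0 1)"
      by (rule shift[OF sp gd]) (use F h in \<open>simp_all add: algebra_simps power2_eq_square\<close>)
    then show ?thesis unfolding N_def by blast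
  next
    case False
    then have "even (j + K)" using oK by simp
    then obtain h where h: "j + K = 2*h" by blast
    have "good S x (l + NN S * j) (M ** m3 1 ((N5 S)^2 * N1 S) h 0 1 ((N4 S)^2 * N2 S) 0 0 1)"
    proof (rule shift[OF sp gd])
      show "(N5 S)\<^sup>2 * N1 S * (N3 S * N5 S * (N4 S)\<^sup>2 * N2 S) + (N4 S)\<^sup>2 * N2 S * (- N3 S * N5 S ^ 3 * N1 S) = 0"
        by (simp add: algebra_simps power2_eq_square power3_eq_cube)
      have "2*h = j + K" using h by simp
      then show "2 * h * (N3 S * N5 S * (N4 S)\<^sup>2 * N2 S) + (N4 S)\<^sup>2 * N2 S * ((N4 S)\<^sup>2 * N2 S) * (- N3 S * N5 S ^ 3 * N1 S) =
          N4 S * N2 S * NN S * j"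
        using F unfolding K_def by (simp add: algebra_simps power2_eq_square power3_eq_cube)
    qed
    then show ?thesis unfolding N_def by blast
  qed
  then obtain M' where gd': "good S x l' M'" using lj by auto
  have "coprime l' N"
  proof (rule ccontr)
    assume "\<not> coprime l' N"
    then obtain p where p: "prime p" "p dvd l'" "p dvd N" using not_coprime_prime[of N l'] N0
      by (auto simp: coprime_commute)
    then have "p dvd l' - N * j" by simp
    then have "p dvd l" using lj by simp
    then have "is_unit p" using coprime_common_divisor[of l N p] cop p N_def by simp
    then show False using p(1) by (simp add: not_prime_unit)
  qed
  then have "gcd l' N = 1" by (simp add: coprime_iff_gcd_eq_1)
  then have fin: "0 \<le> l' \<and> l' < NN S \<and> gcd l' (NN S) = 1 \<and> good S x l' M'" using b gd' N_def by simp
  show ?thesis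
    apply (rule exI[where x=l'])
    apply (rule exI[where x=M'])
    by (rule fin)
qed


lemma col_mult: "column 1 (A ** B :: mat3) = A *v column 1 B"
  by (simp add: column_def matrix_matrix_mult_def matrix_vector_mult_def vec_eq_iff)

lemma cop_loc2:
  fixes n1 n2 n3 n4 n5 :: int
  assumes pos: "n1 > 0" "n2 > 0" "n3 > 0" "n4 > 0" "n5 > 0"
    and loc: "\<And>p. prime p \<Longrightarrow> multiplicity p n1 + multiplicity p n2 + multiplicity p n3 + multiplicity p n4 + multiplicity p n5 \<le> 1"
  shows "coprime (n4^2*n2) (n5^2*n1)"
proof (rule ccontr)
  assume "\<not> coprime (n4^2*n2) (n5^2*n1)"
  then obtain p where p: "prime p" "p dvd n4^2*n2" "p dvd n5^2*n1"
    using not_coprime_prime[of "n4^2*n2" "n5^2*n1"] pos by auto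
  have A: "p dvd n4 \<or> p dvd n2" using p by (auto simp add: prime_dvd_mult_iff prime_dvd_power_iff)
  have B: "p dvd n5 \<or> p dvd n1" using p by (auto simp add: prime_dvd_mult_iff prime_dvd_power_iff)
  have l: "multiplicity p n1 + multiplicity p n2 + multiplicity p n3 + multiplicity p n4 + multiplicity p n5 \<le> 1"
    using loc p by simp
  have m: "multiplicity p n \<ge> 1" if "p dvd n" "n > 0" for n using mge1[OF p(1) that(1)] that(2) by simp
  from A B show False
  proof (elim disjE)
    assume "p dvd n4" "p dvd n5" then show False using m[of n4] m[of n5] pos l by linarith
  next
    assume "p dvd n4" "p dvd n1" then show False using m[of n4] m[of n1] pos l by linarith
  next
    assume "p dvd n2" "p dvd n5" then show False using m[of n2] m[of n5] pos l by linarith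
  next
    assume "p dvd n2" "p dvd n1" then show False using m[of n2] m[of n1] pos l by linarith
  qed
qed

lemma part2_unique:
  assumes sp: "special S" and orb: "same_orbit S x x'"
    and gd: "good S x l M" and gd': "good S x' l' M'"
    and b: "0 \<le> l" "l < NN S" "0 \<le> l'" "l' < NN S"
  shows "l = l'"
proof -
  define W where "W = entries_gcd (adj3 S)"
  note F = special_facts[OF sp, folded W_def]
  obtain A where A: "det A = 1 \<or> det A = -1" "transpose A ** S ** A = S" "x' = A *v x"
    using orb unfolding same_orbit_def by blast
  define d where "d = det A"
  have dd: "d * d = 1" using A(1) unfolding d_def by auto
  have g: "det M = 1" "column 1 M = x" "transpose M ** S ** M = S3 S l" using gd unfolding good_def by auto
  have g': "det M' = 1" "column 1 M' = x'" "transpose M' ** S ** M' = S3 S l'" using gd' unfolding good_def by auto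
  define J where "J = m3 1 0 0 0 d 0 0 0 1"
  define M1 where "M1 = A ** M ** J"
  have dM1: "det M1 = 1" unfolding M1_def J_def using g dd by (simp add: det_mul m3_det d_def)
  have "column 1 M1 = column 1 (A ** M)" unfolding M1_def J_def by (rule col1_mult) simp_all
  then have cM1: "column 1 M1 = x'" using g A by (simp add: col_mult)
  have sM1: "transpose M1 ** S ** M1 = S3 S l"
  proof -
    have "transpose M1 ** S ** M1 = transpose J ** (transpose M ** (transpose A ** S ** A) ** M) ** J"
      unfolding M1_def by (simp add: matrix_transpose_mul matrix_mul_assoc)
    also have "\<dots> = transpose J ** S3 S l ** J" using A g by simp
    also have "\<dots> = S3 S l" unfolding J_def S3_m3 m3_transpose m3_mult m3_eq_iff using dd
      by (simp add: algebra_simps)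
    finally show ?thesis .
  qed
  define U where "U = adj3 M1 ** M'"
  have MU: "M1 ** U = M'" unfolding U_def using dM1 by (simp add: matrix_mul_assoc mult_adj3)
  have sU: "transpose U ** S3 S l ** U = S3 S l'"
  proof -
    have "transpose U ** S3 S l ** U = transpose (M1 ** U) ** S ** (M1 ** U)"
      unfolding sM1[symmetric] by (simp add: matrix_transpose_mul matrix_mul_assoc)
    then show ?thesis using MU g' by simp
  qed
  have cU: "column 1 U = column 1 (mat 1 :: mat3)"
  proof -
    have "column 1 U = adj3 M1 *v column 1 M1" unfolding U_def col_mult g' cM1 ..
    also have "\<dots> = column 1 (adj3 M1 ** M1)" by (simp add: col_mult)
    also have "\<dots> = column 1 (mat 1 :: mat3)" using dM1 by (simp add: adj3_mult_self)
    finally show ?thesis .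
  qed
  then have U1: "U$1$1 = 1" "U$2$1 = 0" "U$3$1 = 0"
    by (simp_all add: column_def vec_eq_iff mat_def forall_3)
  have dU: "det U = 1" unfolding U_def using dM1 g' by (simp add: det_mul det_adj3)
  define u where "u = U$1$2"
  define v where "v = U$1$3"
  define p where "p = U$2$2"
  define q where "q = U$2$3"
  define r where "r = U$3$2"
  define w where "w = U$3$3"
  have Ue: "U = m3 1 u v 0 p q 0 r w" unfolding u_def v_def p_def q_def r_def w_def
    using U1 by (intro trans[OF m3_eta[of U]]) simp
  define a where "a = N3 S * N5 S * (N4 S)^2 * N2 S"
  define bb where "bb = - N3 S * (N5 S)^3 * N1 S"
  have a0: "a > 0" unfolding a_def using F by simp
  define c where "c = N4 S * N2 S * l"
  define c' where "c' = N4 S * N2 S * l'"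
  have E: "a*r = 0 \<and> a*w = a \<and> a*(u*w + r * v) + bb*p*q + c*r*w = 0 \<and> 2*a * v * w + bb*q*q + c*w*w = c'"
    using sU unfolding Ue S3_m3 m3_transpose m3_mult m3_eq_iff a_def[symmetric] bb_def[symmetric] c_def[symmetric] c'_def[symmetric]
    by (simp add: algebra_simps)
  have dU': "p*w - q*r = 1" using dU unfolding Ue m3_det by simp
  have r0: "r = 0" using E a0 by simp
  have w1: "w = 1" using E a0 by simp
  have p1: "p = 1" using dU' r0 w1 by simp
  have E23: "u*a + q*bb = 0" using E r0 w1 p1 by (simp add: algebra_simps)
  have E33: "2*a * v + bb*q*q + c = c'" using E w1 by simp
  have "N3 S * N5 S * (u * ((N4 S)^2 * N2 S)) = N3 S * N5 S * (q * ((N5 S)^2 * N1 S))"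
    using E23 unfolding a_def bb_def by (simp add: algebra_simps power2_eq_square power3_eq_cube)
  then have "u * ((N4 S)^2 * N2 S) = q * ((N5 S)^2 * N1 S)" using F by simp
  then have "(N4 S)^2 * N2 S dvd q * ((N5 S)^2 * N1 S)" by (metis dvd_triv_right)
  moreover have "coprime ((N4 S)^2 * N2 S) ((N5 S)^2 * N1 S)"
    using cop_loc2[of "N1 S" "N2 S" "N3 S" "N4 S" "N5 S"] F by simp
  ultimately have "(N4 S)^2 * N2 S dvd q" by (simp add: coprime_dvd_mult_left_iff)
  then obtain q' where q': "q = (N4 S)^2 * N2 S * q'" by blast
  have "N4 S * N2 S * l' = N4 S * N2 S * (l + NN S * (2 * v - (N5 S)^2 * N1 S * (N4 S)^2 * N2 S * q' * q'))"
    using E33 F unfolding a_def bb_def c_def c'_def q' by (simp add: algebra_simps power2_eq_square power3_eq_cube)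
  then have le: "l' = l + NN S * (2 * v - (N5 S)^2 * N1 S * (N4 S)^2 * N2 S * q' * q')" using F by simp
  define z where "z = 2 * v - (N5 S)^2 * N1 S * (N4 S)^2 * N2 S * q' * q'"
  have "l' - l = NN S * z" using le z_def by simp
  moreover have "z = 0"
  proof (rule ccontr)
    assume "z \<noteq> 0"
    then have "\<bar>NN S * z\<bar> \<ge> NN S" using F by (simp add: abs_mult)
    then show False using \<open>l' - l = NN S * z\<close> b by linarith
  qed
  ultimately show ?thesis by simp
qed


theorem lemma1:
  fixes S :: mat3
  assumes sym: "transpose S = S"
    and sp: "special S"
  shows "(\<forall>x\<in>CS S. \<exists>l M. good S x l M)
    \<and> (odd (det S) \<longrightarrow>
        (\<forall>x\<in>CS S. \<exists>l M. 0 \<le> l \<and> l < NN S \<and> gcd l (NN S) = 1 \<and> good S x l M)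
        \<and> (\<forall>x\<in>CS S. \<forall>x'\<in>CS S. \<forall>l l' M M'. same_orbit S x x' \<and>
              0 \<le> l \<and> l < NN S \<and> gcd l (NN S) = 1 \<and> good S x l M \<and>
              0 \<le> l' \<and> l' < NN S \<and> gcd l' (NN S) = 1 \<and> good S x' l' M' \<longrightarrow> l = l'))
    \<and> (\<forall>x\<in>CS S. \<forall>l M. good S x l M \<longrightarrow> prim_adj (S3 S l) = S3_dagger S l)"
proof (intro conjI impI ballI allI)
  fix x assume "x \<in> CS S"
  then show "\<exists>l M. good S x l M" by (rule part1[OF sym sp])
next
  fix x assume "odd (det S)" "x \<in> CS S"
  then show "\<exists>l M. 0 \<le> l \<and> l < NN S \<and> gcd l (NN S) = 1 \<and> good S x l M"
    by (intro part2_exist[OF sym sp])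
next
  fix x x' l l' M M'
  assume h: "same_orbit S x x' \<and>
              0 \<le> l \<and> l < NN S \<and> gcd l (NN S) = 1 \<and> good S x l M \<and>
              0 \<le> l' \<and> l' < NN S \<and> gcd l' (NN S) = 1 \<and> good S x' l' M'"
  show "l = l'" using h by (intro part2_unique[OF sp, of x x' l M l' M']) simp_all
next
  fix x l M assume "good S x l M"
  then show "prim_adj (S3 S l) = S3_dagger S l" by (rule part3[OF sp])
qed

end
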